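(* Let $\mathcal{B}$ be an abelian category and $f:V_1\to V_2$, $g:V_2\to V_3$ morphisms in $\mathcal{B}$. Let $(C,p)$ be the cokernel of $f$ (with $p:V_2\to C$) and $(K,i)$ the kernel of $g$ (with $i:K\to V_2$), and assume $p\circ i=0$. Then $$\widehat{\mathrm{Im}(f)}+\widehat{\mathrm{Im}(g)}=\widehat{V_2}+\widehat{\mathrm{Im}(g\circ f)}$$ in $K_0(\mathcal{B})$. Moreover, if $\mathcal{B}$ is the category of finite-dimensional vector spaces over a finite field $\mathbb{k}$, then $|\mathrm{Im}(f)|\cdot|\mathrm{Im}(g)|=|V_2|\cdot|\mathrm{Im}(g\circ f)|$.
   Context: $\widehat{V}$ denotes the class of an object $V$ in the Grothendieck group $K_0(\mathcal{B})$; $|V|$ denotes the cardinality of a finite set. *)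

theory Defs
  imports Main "HOL-Library.Function_Algebras" "HOL.Vector_Spaces"
begin

text \<open>A category given by a set of objects, a set of arrows with source/target,
  composition (cmp g f = g after f) and identities, together with a preadditive
  structure: zero arrows, addition and negation of parallel arrows.\<close>

record ('o, 'm) acat =
  ob  :: "'o set"
  ar  :: "'m set"
  src :: "'m \<Rightarrow> 'o"
  tgt :: "'m \<Rightarrow> 'o"
  cmp :: "'m \<Rightarrow> 'm \<Rightarrow> 'm"
  idt :: "'o \<Rightarrow> 'm"
  zr  :: "'o \<Rightarrow> 'o \<Rightarrow> 'm"
  pl  :: "'m \<Rightarrow> 'm \<Rightarrow> 'm"
  ng  :: "'m \<Rightarrow> 'm"

definition hom :: "('o,'m,'x) acat_scheme \<Rightarrow> 'o \<Rightarrow> 'o \<Rightarrow> 'm set" where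
  "hom C a b = {f \<in> ar C. src C f = a \<and> tgt C f = b}"

definition is_category :: "('o,'m,'x) acat_scheme \<Rightarrow> bool" where
  "is_category C \<longleftrightarrow>
    (\<forall>f\<in>ar C. src C f \<in> ob C \<and> tgt C f \<in> ob C) \<and>
    (\<forall>a\<in>ob C. idt C a \<in> hom C a a) \<and>
    (\<forall>f\<in>ar C. \<forall>g\<in>ar C. src C g = tgt C f \<longrightarrow> cmp C g f \<in> hom C (src C f) (tgt C g)) \<and>
    (\<forall>f\<in>ar C. cmp C (idt C (tgt C f)) f = f \<and> cmp C f (idt C (src C f)) = f) \<and>
    (\<forall>f\<in>ar C. \<forall>g\<in>ar C. \<forall>h\<in>ar C. src C g = tgt C f \<and> src C h = tgt C g \<longrightarrow>
        cmp C h (cmp C g f) = cmp C (cmp C h g) f)"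

definition is_preadditive :: "('o,'m,'x) acat_scheme \<Rightarrow> bool" where
  "is_preadditive C \<longleftrightarrow> is_category C \<and>
    (\<forall>a\<in>ob C. \<forall>b\<in>ob C.
       zr C a b \<in> hom C a b \<and>
       (\<forall>f\<in>hom C a b. \<forall>g\<in>hom C a b. pl C f g \<in> hom C a b) \<and>
       (\<forall>f\<in>hom C a b. ng C f \<in> hom C a b) \<and>
       (\<forall>f\<in>hom C a b. \<forall>g\<in>hom C a b. \<forall>h\<in>hom C a b. pl C (pl C f g) h = pl C f (pl C g h)) \<and>
       (\<forall>f\<in>hom C a b. \<forall>g\<in>hom C a b. pl C f g = pl C g f) \<and>
       (\<forall>f\<in>hom C a b. pl C f (zr C a b) = f) \<and>
       (\<forall>f\<in>hom C a b. pl C f (ng C f) = zr C a b)) \<and>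
    (\<forall>a\<in>ob C. \<forall>b\<in>ob C. \<forall>c\<in>ob C.
       (\<forall>f\<in>hom C a b. \<forall>g\<in>hom C a b. \<forall>h\<in>hom C b c.
          cmp C h (pl C f g) = pl C (cmp C h f) (cmp C h g)) \<and>
       (\<forall>f\<in>hom C b c. \<forall>g\<in>hom C b c. \<forall>h\<in>hom C a b.
          cmp C (pl C f g) h = pl C (cmp C f h) (cmp C g h)))"

definition is_mono :: "('o,'m,'x) acat_scheme \<Rightarrow> 'm \<Rightarrow> bool" where
  "is_mono C m \<longleftrightarrow> m \<in> ar C \<and>
    (\<forall>x\<in>ob C. \<forall>g\<in>hom C x (src C m). \<forall>h\<in>hom C x (src C m).
       cmp C m g = cmp C m h \<longrightarrow> g = h)"

definition is_epi :: "('o,'m,'x) acat_scheme \<Rightarrow> 'm \<Rightarrow> bool" where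
  "is_epi C e \<longleftrightarrow> e \<in> ar C \<and>
    (\<forall>x\<in>ob C. \<forall>g\<in>hom C (tgt C e) x. \<forall>h\<in>hom C (tgt C e) x.
       cmp C g e = cmp C h e \<longrightarrow> g = h)"

definition is_kernel :: "('o,'m,'x) acat_scheme \<Rightarrow> 'm \<Rightarrow> 'o \<Rightarrow> 'm \<Rightarrow> bool" where
  "is_kernel C f k i \<longleftrightarrow> f \<in> ar C \<and> k \<in> ob C \<and> i \<in> hom C k (src C f) \<and>
     cmp C f i = zr C k (tgt C f) \<and>
     (\<forall>x\<in>ob C. \<forall>h\<in>hom C x (src C f). cmp C f h = zr C x (tgt C f) \<longrightarrow>
        (\<exists>!u. u \<in> hom C x k \<and> cmp C i u = h))"

definition is_cokernel :: "('o,'m,'x) acat_scheme \<Rightarrow> 'm \<Rightarrow> 'o \<Rightarrow> 'm \<Rightarrow> bool" where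
  "is_cokernel C f c p \<longleftrightarrow> f \<in> ar C \<and> c \<in> ob C \<and> p \<in> hom C (tgt C f) c \<and>
     cmp C p f = zr C (src C f) c \<and>
     (\<forall>x\<in>ob C. \<forall>h\<in>hom C (tgt C f) x. cmp C h f = zr C (src C f) x \<longrightarrow>
        (\<exists>!u. u \<in> hom C c x \<and> cmp C u p = h))"

definition abelian_cat :: "('o,'m,'x) acat_scheme \<Rightarrow> bool" where
  "abelian_cat C \<longleftrightarrow> is_preadditive C \<and>
    \<comment> \<open>zero object\<close>
    (\<exists>z\<in>ob C. \<forall>a\<in>ob C. (\<exists>!f. f \<in> hom C z a) \<and> (\<exists>!f. f \<in> hom C a z)) \<and>
    \<comment> \<open>binary products (hence biproducts)\<close>
    (\<forall>a\<in>ob C. \<forall>b\<in>ob C. \<exists>p\<in>ob C. \<exists>p1\<in>hom C p a. \<exists>p2\<in>hom C p b.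
       \<forall>x\<in>ob C. \<forall>f\<in>hom C x a. \<forall>g\<in>hom C x b.
         \<exists>!u. u \<in> hom C x p \<and> cmp C p1 u = f \<and> cmp C p2 u = g) \<and>
    \<comment> \<open>kernels and cokernels exist\<close>
    (\<forall>f\<in>ar C. \<exists>k i. is_kernel C f k i) \<and>
    (\<forall>f\<in>ar C. \<exists>c p. is_cokernel C f c p) \<and>
    \<comment> \<open>every mono is a kernel, every epi is a cokernel\<close>
    (\<forall>m. is_mono C m \<longrightarrow> (\<exists>f\<in>ar C. is_kernel C f (src C m) m)) \<and>
    (\<forall>e. is_epi C e \<longrightarrow> (\<exists>f\<in>ar C. is_cokernel C f (tgt C e) e))"

definition is_image :: "('o,'m,'x) acat_scheme \<Rightarrow> 'm \<Rightarrow> 'o \<Rightarrow> bool" where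
  "is_image C f I \<longleftrightarrow> (\<exists>c p j. is_cokernel C f c p \<and> is_kernel C p I j)"

definition short_exact :: "('o,'m,'x) acat_scheme \<Rightarrow> 'o \<Rightarrow> 'o \<Rightarrow> 'o \<Rightarrow> bool" where
  "short_exact C A B D \<longleftrightarrow> (\<exists>a b. a \<in> hom C A B \<and> b \<in> hom C B D \<and>
      is_kernel C b A a \<and> is_cokernel C a D b)"

text \<open>Free abelian group on the objects: finitely supported functions 'o \<Rightarrow> int;
  the generator of an object x is cls x.  K_0 is its quotient by the subgroup
  generated by [B] - [A] - [D] for short exact sequences 0 \<rightarrow> A \<rightarrow> B \<rightarrow> D \<rightarrow> 0.\<close>

definition cls :: "'o \<Rightarrow> ('o \<Rightarrow> int)" where
  "cls x = (\<lambda>y. if y = x then 1 else 0)"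

inductive_set K0_rel :: "('o,'m,'x) acat_scheme \<Rightarrow> ('o \<Rightarrow> int) set" for C where
  zero: "0 \<in> K0_rel C"
| gen: "A \<in> ob C \<Longrightarrow> B \<in> ob C \<Longrightarrow> D \<in> ob C \<Longrightarrow> short_exact C A B D \<Longrightarrow>
          cls B - cls A - cls D \<in> K0_rel C"
| diff: "x \<in> K0_rel C \<Longrightarrow> y \<in> K0_rel C \<Longrightarrow> x - y \<in> K0_rel C"

definition K0_eq :: "('o,'m,'x) acat_scheme \<Rightarrow> ('o \<Rightarrow> int) \<Rightarrow> ('o \<Rightarrow> int) \<Rightarrow> bool" where
  "K0_eq C u v \<longleftrightarrow> u - v \<in> K0_rel C"

end

theory Submission
  imports Defs "HOL-Library.FuncSet"
begin


locale abcat =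
  fixes C :: "('o,'m,'x) acat_scheme"
  assumes ab: "abelian_cat C"
begin

lemma pre: "is_preadditive C"
  using ab unfolding abelian_cat_def by blast

lemma cat: "is_category C"
  using pre unfolding is_preadditive_def by blast

lemma bilin: "\<forall>a\<in>ob C. \<forall>b\<in>ob C. \<forall>c\<in>ob C.
       (\<forall>f\<in>hom C a b. \<forall>g\<in>hom C a b. \<forall>h\<in>hom C b c.
          cmp C h (pl C f g) = pl C (cmp C h f) (cmp C h g)) \<and>
       (\<forall>f\<in>hom C b c. \<forall>g\<in>hom C b c. \<forall>h\<in>hom C a b.
          cmp C (pl C f g) h = pl C (cmp C f h) (cmp C g h))"
  using pre unfolding is_preadditive_def by (elim conjE)

lemma homD: "f \<in> hom C a b \<Longrightarrow> f \<in> ar C \<and> src C f = a \<and> tgt C f = b"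
  by (simp add: hom_def)

lemma homI: "f \<in> ar C \<Longrightarrow> f \<in> hom C (src C f) (tgt C f)"
  by (simp add: hom_def)

lemma c_ob: "\<forall>f\<in>ar C. src C f \<in> ob C \<and> tgt C f \<in> ob C"
  using cat unfolding is_category_def by (elim conjE)
lemma c_id: "\<forall>a\<in>ob C. idt C a \<in> hom C a a"
  using cat unfolding is_category_def by (elim conjE)
lemma c_comp: "\<forall>f\<in>ar C. \<forall>g\<in>ar C. src C g = tgt C f \<longrightarrow> cmp C g f \<in> hom C (src C f) (tgt C g)"
  using cat unfolding is_category_def by (elim conjE)
lemma c_idlr: "\<forall>f\<in>ar C. cmp C (idt C (tgt C f)) f = f \<and> cmp C f (idt C (src C f)) = f"
  using cat unfolding is_category_def by (elim conjE)
lemma c_assoc: "\<forall>f\<in>ar C. \<forall>g\<in>ar C. \<forall>h\<in>ar C. src C g = tgt C f \<and> src C h = tgt C g \<longrightarrow>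
        cmp C h (cmp C g f) = cmp C (cmp C h g) f"
  using cat unfolding is_category_def by (elim conjE)

lemma hom_ob: "f \<in> hom C a b \<Longrightarrow> a \<in> ob C \<and> b \<in> ob C"
  using c_ob unfolding hom_def by blast

lemma grp: "\<forall>a\<in>ob C. \<forall>b\<in>ob C.
       zr C a b \<in> hom C a b \<and>
       (\<forall>f\<in>hom C a b. \<forall>g\<in>hom C a b. pl C f g \<in> hom C a b) \<and>
       (\<forall>f\<in>hom C a b. ng C f \<in> hom C a b) \<and>
       (\<forall>f\<in>hom C a b. \<forall>g\<in>hom C a b. \<forall>h\<in>hom C a b. pl C (pl C f g) h = pl C f (pl C g h)) \<and>
       (\<forall>f\<in>hom C a b. \<forall>g\<in>hom C a b. pl C f g = pl C g f) \<and>
       (\<forall>f\<in>hom C a b. pl C f (zr C a b) = f) \<and>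
       (\<forall>f\<in>hom C a b. pl C f (ng C f) = zr C a b)"
  using pre unfolding is_preadditive_def by (elim conjE)

lemma grp_ab: "f \<in> hom C a b \<Longrightarrow> 
       zr C a b \<in> hom C a b \<and>
       (\<forall>f\<in>hom C a b. \<forall>g\<in>hom C a b. pl C f g \<in> hom C a b) \<and>
       (\<forall>f\<in>hom C a b. ng C f \<in> hom C a b) \<and>
       (\<forall>f\<in>hom C a b. \<forall>g\<in>hom C a b. \<forall>h\<in>hom C a b. pl C (pl C f g) h = pl C f (pl C g h)) \<and>
       (\<forall>f\<in>hom C a b. \<forall>g\<in>hom C a b. pl C f g = pl C g f) \<and>
       (\<forall>f\<in>hom C a b. pl C f (zr C a b) = f) \<and>
       (\<forall>f\<in>hom C a b. pl C f (ng C f) = zr C a b)"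
proof -
  assume "f \<in> hom C a b"
  then have "a \<in> ob C" "b \<in> ob C" using hom_ob by blast+
  then show ?thesis using grp by blast
qed

lemma comp: "f \<in> hom C a b \<Longrightarrow> g \<in> hom C b c \<Longrightarrow> cmp C g f \<in> hom C a c"
  using c_comp unfolding hom_def by blast

lemma assoc: "f \<in> hom C a b \<Longrightarrow> g \<in> hom C b c \<Longrightarrow> h \<in> hom C c d \<Longrightarrow>
   cmp C h (cmp C g f) = cmp C (cmp C h g) f"
  using c_assoc unfolding hom_def by blast

lemma idt_hom: "a \<in> ob C \<Longrightarrow> idt C a \<in> hom C a a"
  using c_id by blast

lemma idl: "f \<in> hom C a b \<Longrightarrow> cmp C (idt C b) f = f"
  using c_idlr unfolding hom_def by blast

lemma idr: "f \<in> hom C a b \<Longrightarrow> cmp C f (idt C a) = f"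
  using c_idlr unfolding hom_def by blast

lemma zr_hom: "a \<in> ob C \<Longrightarrow> b \<in> ob C \<Longrightarrow> zr C a b \<in> hom C a b"
  using grp by blast

lemma pl_hom: "f \<in> hom C a b \<Longrightarrow> g \<in> hom C a b \<Longrightarrow> pl C f g \<in> hom C a b"
  using grp_ab by blast

lemma ng_hom: "f \<in> hom C a b \<Longrightarrow> ng C f \<in> hom C a b"
  using grp_ab by blast

lemma pl_assoc: "f \<in> hom C a b \<Longrightarrow> g \<in> hom C a b \<Longrightarrow> h \<in> hom C a b \<Longrightarrow>
   pl C (pl C f g) h = pl C f (pl C g h)"
  using grp_ab by blast

lemma pl_comm: "f \<in> hom C a b \<Longrightarrow> g \<in> hom C a b \<Longrightarrow> pl C f g = pl C g f"
  using grp_ab by blast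

lemma pl_zr: "f \<in> hom C a b \<Longrightarrow> pl C f (zr C a b) = f"
  using grp_ab by blast

lemma pl_ng: "f \<in> hom C a b \<Longrightarrow> pl C f (ng C f) = zr C a b"
  using grp_ab by blast

lemma distl: "f \<in> hom C a b \<Longrightarrow> g \<in> hom C a b \<Longrightarrow> h \<in> hom C b c \<Longrightarrow>
   cmp C h (pl C f g) = pl C (cmp C h f) (cmp C h g)"
proof -
  assume a: "f \<in> hom C a b" "g \<in> hom C a b" "h \<in> hom C b c"
  then have "a \<in> ob C" "b \<in> ob C" "c \<in> ob C" using hom_ob by blast+
  then have "\<forall>f\<in>hom C a b. \<forall>g\<in>hom C a b. \<forall>h\<in>hom C b c.
          cmp C h (pl C f g) = pl C (cmp C h f) (cmp C h g)" using bilin by blast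
  then show ?thesis using a by blast
qed

lemma distr: "f \<in> hom C b c \<Longrightarrow> g \<in> hom C b c \<Longrightarrow> h \<in> hom C a b \<Longrightarrow>
   cmp C (pl C f g) h = pl C (cmp C f h) (cmp C g h)"
proof -
  assume a: "f \<in> hom C b c" "g \<in> hom C b c" "h \<in> hom C a b"
  then have "a \<in> ob C" "b \<in> ob C" "c \<in> ob C" using hom_ob by blast+
  then have "\<forall>f\<in>hom C b c. \<forall>g\<in>hom C b c. \<forall>h\<in>hom C a b.
          cmp C (pl C f g) h = pl C (cmp C f h) (cmp C g h)" using bilin by blast
  then show ?thesis using a by blast
qed

lemma idem_zr:
  assumes x: "x \<in> hom C a b" and e: "pl C x x = x"
  shows "x = zr C a b"
proof -
  have n: "ng C x \<in> hom C a b" using ng_hom[OF x] .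
  have "x = pl C x (zr C a b)" using pl_zr[OF x] by simp
  also have "\<dots> = pl C x (pl C x (ng C x))" using pl_ng[OF x] by simp
  also have "\<dots> = pl C (pl C x x) (ng C x)" using pl_assoc[OF x x n] by simp
  also have "\<dots> = zr C a b" using e pl_ng[OF x] by simp
  finally show ?thesis .
qed

lemma comp_zr_r:
  assumes h: "h \<in> hom C b c" and a: "a \<in> ob C"
  shows "cmp C h (zr C a b) = zr C a c"
proof -
  have b: "b \<in> ob C" using hom_ob[OF h] by blast
  have z: "zr C a b \<in> hom C a b" using zr_hom[OF a b] .
  have hz: "cmp C h (zr C a b) \<in> hom C a c" using comp[OF z h] .
  have "pl C (zr C a b) (zr C a b) = zr C a b" using pl_zr[OF z] .
  then have "pl C (cmp C h (zr C a b)) (cmp C h (zr C a b)) = cmp C h (zr C a b)"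
    using distl[OF z z h] by simp
  then show ?thesis using idem_zr[OF hz] by simp
qed

lemma comp_zr_l:
  assumes h: "h \<in> hom C a b" and c: "c \<in> ob C"
  shows "cmp C (zr C b c) h = zr C a c"
proof -
  have b: "b \<in> ob C" using hom_ob[OF h] by blast
  have z: "zr C b c \<in> hom C b c" using zr_hom[OF b c] .
  have hz: "cmp C (zr C b c) h \<in> hom C a c" using comp[OF h z] .
  have "pl C (zr C b c) (zr C b c) = zr C b c" using pl_zr[OF z] .
  then have "pl C (cmp C (zr C b c) h) (cmp C (zr C b c) h) = cmp C (zr C b c) h"
    using distr[OF z z h] by simp
  then show ?thesis using idem_zr[OF hz] by simp
qed

lemma eq_of_sub:
  assumes x: "x \<in> hom C a b" and y: "y \<in> hom C a b" and s: "pl C x (ng C y) = zr C a b"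
  shows "x = y"
proof -
  have n: "ng C y \<in> hom C a b" using ng_hom[OF y] .
  have "y = pl C y (zr C a b)" using pl_zr[OF y] by simp
  also have "\<dots> = pl C y (pl C x (ng C y))" using s by simp
  also have "\<dots> = pl C x (pl C y (ng C y))"
    using pl_assoc[OF y x n] pl_assoc[OF x y n] pl_comm[OF x y] by simp
  also have "\<dots> = x" using pl_ng[OF y] pl_zr[OF x] by simp
  finally show ?thesis by simp
qed

lemma epiI:
  assumes e: "e \<in> hom C a b"
    and z: "\<And>x y. x \<in> ob C \<Longrightarrow> y \<in> hom C b x \<Longrightarrow> cmp C y e = zr C a x \<Longrightarrow> y = zr C b x"
  shows "is_epi C e"
  unfolding is_epi_def
proof (intro conjI ballI impI)
  show "e \<in> ar C" using homD[OF e] by simp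
  fix x g h assume x: "x \<in> ob C" and g: "g \<in> hom C (tgt C e) x" and h: "h \<in> hom C (tgt C e) x"
    and gh: "cmp C g e = cmp C h e"
  have g': "g \<in> hom C b x" and h': "h \<in> hom C b x" using g h homD[OF e] by auto
  have nh: "ng C h \<in> hom C b x" using ng_hom[OF h'] .
  have d: "pl C g (ng C h) \<in> hom C b x" using pl_hom[OF g' nh] .
  have "cmp C (pl C g (ng C h)) e = pl C (cmp C h e) (cmp C (ng C h) e)"
    using distr[OF g' nh e] gh by simp
  also have "\<dots> = cmp C (pl C h (ng C h)) e" using distr[OF h' nh e] by simp
  also have "\<dots> = zr C a x" using pl_ng[OF h'] comp_zr_l[OF e x] by simp
  finally have "pl C g (ng C h) = zr C b x" using z[OF x d] by simp
  then show "g = h" using eq_of_sub[OF g' h'] by simp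
qed

lemma ex1_eq: "\<exists>!u. P u \<Longrightarrow> P a \<Longrightarrow> P b \<Longrightarrow> a = b" by blast

lemma kernel_mono: assumes "is_kernel C f k i" shows "is_mono C i"
  unfolding is_mono_def
proof (intro conjI ballI impI)
  have KK: "f \<in> ar C \<and> k \<in> ob C \<and> i \<in> hom C k (src C f) \<and> cmp C f i = zr C k (tgt C f) \<and>
     (\<forall>x\<in>ob C. \<forall>h\<in>hom C x (src C f). cmp C f h = zr C x (tgt C f) \<longrightarrow>
        (\<exists>!u. u \<in> hom C x k \<and> cmp C i u = h))" using assms unfolding is_kernel_def .
  have i: "i \<in> hom C k (src C f)" using KK by blast
  have f: "f \<in> ar C" using KK by blast
  have fi: "cmp C f i = zr C k (tgt C f)" using KK by blast
  have U: "\<forall>x\<in>ob C. \<forall>h\<in>hom C x (src C f). cmp C f h = zr C x (tgt C f) \<longrightarrow>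
        (\<exists>!u. u \<in> hom C x k \<and> cmp C i u = h)" using KK by (elim conjE)
  show "i \<in> ar C" using homD[OF i] by simp
  fix x g h assume x: "x \<in> ob C" and g: "g \<in> hom C x (src C i)" and h: "h \<in> hom C x (src C i)"
    and gh: "cmp C i g = cmp C i h"
  have g': "g \<in> hom C x k" and h': "h \<in> hom C x k" using g h homD[OF i] by auto
  have f': "f \<in> hom C (src C f) (tgt C f)" using homI[OF f] .
  have ig: "cmp C i g \<in> hom C x (src C f)" using comp[OF g' i] .
  have "cmp C f (cmp C i g) = zr C x (tgt C f)"
    using assoc[OF g' i f'] fi comp_zr_l[OF g'] hom_ob[OF f'] by simp
  then have "\<exists>!u. u \<in> hom C x k \<and> cmp C i u = cmp C i g"
    by (rule mp[OF bspec[OF bspec[OF U x] ig]])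
  then show "g = h" by (rule ex1_eq) (use g' h' gh in auto)
qed

lemma cokernel_epi: assumes "is_cokernel C f c p" shows "is_epi C p"
  unfolding is_epi_def
proof (intro conjI ballI impI)
  have KK: "f \<in> ar C \<and> c \<in> ob C \<and> p \<in> hom C (tgt C f) c \<and>
     cmp C p f = zr C (src C f) c \<and>
     (\<forall>x\<in>ob C. \<forall>h\<in>hom C (tgt C f) x. cmp C h f = zr C (src C f) x \<longrightarrow>
        (\<exists>!u. u \<in> hom C c x \<and> cmp C u p = h))" using assms unfolding is_cokernel_def .
  have p: "p \<in> hom C (tgt C f) c" using KK by blast
  have f: "f \<in> ar C" using KK by blast
  have pf: "cmp C p f = zr C (src C f) c" using KK by blast
  have U: "\<forall>x\<in>ob C. \<forall>h\<in>hom C (tgt C f) x. cmp C h f = zr C (src C f) x \<longrightarrow>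
        (\<exists>!u. u \<in> hom C c x \<and> cmp C u p = h)" using KK by (elim conjE)
  show "p \<in> ar C" using homD[OF p] by simp
  fix x g h assume x: "x \<in> ob C" and g: "g \<in> hom C (tgt C p) x" and h: "h \<in> hom C (tgt C p) x"
    and gh: "cmp C g p = cmp C h p"
  have g': "g \<in> hom C c x" and h': "h \<in> hom C c x" using g h homD[OF p] by auto
  have f': "f \<in> hom C (src C f) (tgt C f)" using homI[OF f] .
  have gp: "cmp C g p \<in> hom C (tgt C f) x" using comp[OF p g'] .
  have "cmp C (cmp C g p) f = zr C (src C f) x"
    using assoc[OF f' p g'] pf comp_zr_r[OF g'] hom_ob[OF f'] by simp
  then have "\<exists>!u. u \<in> hom C c x \<and> cmp C u p = cmp C g p"
    by (rule mp[OF bspec[OF bspec[OF U x] gp]])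
  then show "g = h" by (rule ex1_eq) (use g' h' gh in auto)
qed

lemma mono_cancel:
  assumes m: "is_mono C m" and g: "g \<in> hom C x (src C m)" and h: "h \<in> hom C x (src C m)"
   and e: "cmp C m g = cmp C m h" shows "g = h"
proof -
  have x: "x \<in> ob C" using hom_ob[OF g] by blast
  have "\<forall>x\<in>ob C. \<forall>g\<in>hom C x (src C m). \<forall>h\<in>hom C x (src C m).
       cmp C m g = cmp C m h \<longrightarrow> g = h" using m by (simp add: is_mono_def)
  then show ?thesis using x g h e by blast
qed

lemma mono_comp:
  assumes m1: "is_mono C m1" and m2: "is_mono C m2" and t: "tgt C m1 = src C m2"
  shows "is_mono C (cmp C m2 m1)"
proof -
  have a1: "m1 \<in> ar C" and a2: "m2 \<in> ar C" using m1 m2 unfolding is_mono_def by simp_all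
  have h1: "m1 \<in> hom C (src C m1) (tgt C m1)" using homI[OF a1] .
  have h2: "m2 \<in> hom C (tgt C m1) (tgt C m2)" using homI[OF a2] t by simp
  have c: "cmp C m2 m1 \<in> hom C (src C m1) (tgt C m2)" using comp[OF h1 h2] .
  show ?thesis unfolding is_mono_def
  proof (intro conjI ballI impI)
    show "cmp C m2 m1 \<in> ar C" using homD[OF c] by simp
    fix x g h assume x: "x \<in> ob C" and g: "g \<in> hom C x (src C (cmp C m2 m1))"
      and h: "h \<in> hom C x (src C (cmp C m2 m1))" and gh: "cmp C (cmp C m2 m1) g = cmp C (cmp C m2 m1) h"
    have g': "g \<in> hom C x (src C m1)" and h': "h \<in> hom C x (src C m1)" using g h homD[OF c] by auto
    have "cmp C m2 (cmp C m1 g) = cmp C m2 (cmp C m1 h)"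
      using gh assoc[OF g' h1 h2] assoc[OF h' h1 h2] by simp
    then have "cmp C m1 g = cmp C m1 h"
      using mono_cancel[OF m2] comp[OF g' h1] comp[OF h' h1] t by simp
    then show "g = h" using mono_cancel[OF m1 g' h'] by simp
  qed
qed

lemma kernel_factor:
  assumes k: "is_kernel C f k i" and h: "h \<in> hom C x (src C f)" and z: "cmp C f h = zr C x (tgt C f)"
  obtains u where "u \<in> hom C x k" "cmp C i u = h"
proof -
  have x: "x \<in> ob C" using hom_ob[OF h] by blast
  have "\<forall>x\<in>ob C. \<forall>h\<in>hom C x (src C f). cmp C f h = zr C x (tgt C f) \<longrightarrow>
        (\<exists>!u. u \<in> hom C x k \<and> cmp C i u = h)" using k by (simp add: is_kernel_def)
  then have "\<exists>!u. u \<in> hom C x k \<and> cmp C i u = h" using x h z by simp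
  then have "\<exists>u. u \<in> hom C x k \<and> cmp C i u = h" by (rule ex1_implies_ex)
  then show ?thesis using that by blast
qed

lemma cokernel_factor:
  assumes k: "is_cokernel C f c p" and h: "h \<in> hom C (tgt C f) x" and z: "cmp C h f = zr C (src C f) x"
  obtains u where "u \<in> hom C c x" "cmp C u p = h"
proof -
  have x: "x \<in> ob C" using hom_ob[OF h] by blast
  have "\<forall>x\<in>ob C. \<forall>h\<in>hom C (tgt C f) x. cmp C h f = zr C (src C f) x \<longrightarrow>
        (\<exists>!u. u \<in> hom C c x \<and> cmp C u p = h)" using k by (simp add: is_cokernel_def)
  then have "\<exists>!u. u \<in> hom C c x \<and> cmp C u p = h" using x h z by simp
  then have "\<exists>u. u \<in> hom C c x \<and> cmp C u p = h" by (rule ex1_implies_ex)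
  then show ?thesis using that by blast
qed


lemma kerD: "is_kernel C f k i \<Longrightarrow> f \<in> ar C \<and> k \<in> ob C \<and> i \<in> hom C k (src C f) \<and> cmp C i i = cmp C i i \<and> cmp C f i = zr C k (tgt C f)"
  unfolding is_kernel_def by simp

lemma kerU: "is_kernel C f k i \<Longrightarrow> x \<in> ob C \<Longrightarrow> h \<in> hom C x (src C f) \<Longrightarrow>
   cmp C f h = zr C x (tgt C f) \<Longrightarrow> \<exists>!u. u \<in> hom C x k \<and> cmp C i u = h"
  unfolding is_kernel_def by simp

lemma kerI: "f \<in> ar C \<Longrightarrow> k \<in> ob C \<Longrightarrow> i \<in> hom C k (src C f) \<Longrightarrow> cmp C f i = zr C k (tgt C f) \<Longrightarrow>
   (\<And>x h. x \<in> ob C \<Longrightarrow> h \<in> hom C x (src C f) \<Longrightarrow> cmp C f h = zr C x (tgt C f) \<Longrightarrow>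
      \<exists>!u. u \<in> hom C x k \<and> cmp C i u = h) \<Longrightarrow> is_kernel C f k i"
  unfolding is_kernel_def by simp

lemma cokD: "is_cokernel C f c p \<Longrightarrow> f \<in> ar C \<and> c \<in> ob C \<and> p \<in> hom C (tgt C f) c \<and> cmp C p f = zr C (src C f) c"
  unfolding is_cokernel_def by simp

lemma cokU: "is_cokernel C f c p \<Longrightarrow> x \<in> ob C \<Longrightarrow> h \<in> hom C (tgt C f) x \<Longrightarrow>
   cmp C h f = zr C (src C f) x \<Longrightarrow> \<exists>!u. u \<in> hom C c x \<and> cmp C u p = h"
  unfolding is_cokernel_def by simp

lemma cokI: "f \<in> ar C \<Longrightarrow> c \<in> ob C \<Longrightarrow> p \<in> hom C (tgt C f) c \<Longrightarrow> cmp C p f = zr C (src C f) c \<Longrightarrow>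
   (\<And>x h. x \<in> ob C \<Longrightarrow> h \<in> hom C (tgt C f) x \<Longrightarrow> cmp C h f = zr C (src C f) x \<Longrightarrow>
      \<exists>!u. u \<in> hom C c x \<and> cmp C u p = h) \<Longrightarrow> is_cokernel C f c p"
  unfolding is_cokernel_def by simp

lemma ab_kers: "\<forall>f\<in>ar C. \<exists>k i. is_kernel C f k i"
  using ab unfolding abelian_cat_def by (elim conjE)

lemma ab_monos: "\<forall>m. is_mono C m \<longrightarrow> (\<exists>f\<in>ar C. is_kernel C f (src C m) m)"
  using ab unfolding abelian_cat_def by (elim conjE)

lemma ab_epis: "\<forall>e. is_epi C e \<longrightarrow> (\<exists>f\<in>ar C. is_cokernel C f (tgt C e) e)"
  using ab unfolding abelian_cat_def by (elim conjE)

lemma core: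
  assumes kh: "is_kernel C h K k" and ch: "is_cokernel C h c q" and kq: "is_kernel C q I j"
  shows "\<exists>e. e \<in> hom C (src C h) I \<and> cmp C j e = h \<and> is_kernel C e K k \<and> is_cokernel C k I e"
proof -
  define A where "A = src C h"
  define B where "B = tgt C h"
  have har: "h \<in> ar C" and Kob: "K \<in> ob C" and k: "k \<in> hom C K A" and hk: "cmp C h k = zr C K B"
    using kerD[OF kh] unfolding A_def B_def by auto
  have hh: "h \<in> hom C A B" using homI[OF har] unfolding A_def B_def .
  have q: "q \<in> hom C B c" and qh: "cmp C q h = zr C A c" and cob: "c \<in> ob C"
    using cokD[OF ch] unfolding A_def B_def by auto
  have sq: "src C q = B" and tq: "tgt C q = c" using homD[OF q] by auto
  have j: "j \<in> hom C I B" and Iob: "I \<in> ob C" and qj: "cmp C q j = zr C I c"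
    using kerD[OF kq] sq tq by auto
  have jm: "is_mono C j" by (rule kernel_mono[OF kq])
  obtain e where e: "e \<in> hom C A I" and je: "cmp C j e = h"
    using kernel_factor[OF kq, of h A] hh qh sq tq by auto
  have se: "src C e = A" and te: "tgt C e = I" and ear: "e \<in> ar C" using homD[OF e] by auto
  have ek: "cmp C e k = zr C K I"
  proof -
    have "cmp C j (cmp C e k) = zr C K B" using assoc[OF k e j] je hk by simp
    also have "\<dots> = cmp C j (zr C K I)" using comp_zr_r[OF j Kob] by simp
    finally show ?thesis
      using mono_cancel[OF jm, of "cmp C e k" K "zr C K I"] comp[OF k e] zr_hom[OF Kob Iob] homD[OF j]
      by auto
  qed
  have ke: "is_kernel C e K k"
  proof (rule kerI)
    show "e \<in> ar C" "K \<in> ob C" "k \<in> hom C K (src C e)" "cmp C e k = zr C K (tgt C e)"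
      using ear Kob k se ek te by auto
    fix x y assume x: "x \<in> ob C" and y: "y \<in> hom C x (src C e)" and ey: "cmp C e y = zr C x (tgt C e)"
    have y': "y \<in> hom C x A" using y se by simp
    have "cmp C h y = cmp C j (cmp C e y)" using assoc[OF y' e j] je by simp
    also have "\<dots> = zr C x B" using ey te comp_zr_r[OF j x] by simp
    finally have "cmp C h y = zr C x (tgt C h)" unfolding B_def .
    then show "\<exists>!u. u \<in> hom C x K \<and> cmp C k u = y"
      using kerU[OF kh x] y' unfolding A_def by simp
  qed
  have epi: "is_epi C e"
  proof (rule epiI[OF e])
    fix x y assume x: "x \<in> ob C" and y: "y \<in> hom C I x" and ye: "cmp C y e = zr C A x"
    have yar: "y \<in> ar C" and sy: "src C y = I" and ty: "tgt C y = x" using homD[OF y] by auto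
    have "\<exists>M m. is_kernel C y M m" using bspec[OF ab_kers yar] .
    then obtain M m where km: "is_kernel C y M m" by blast
    have m: "m \<in> hom C M I" and Mob: "M \<in> ob C" and ym: "cmp C y m = zr C M x"
      using kerD[OF km] sy ty by auto
    obtain e' where e': "e' \<in> hom C A M" and me: "cmp C m e' = e"
      using kernel_factor[OF km, of e A] e ye sy ty by auto
    have mm: "is_mono C m" by (rule kernel_mono[OF km])
    have tm: "tgt C m = I" and sm: "src C m = M" using homD[OF m] by auto
    have jmm: "is_mono C (cmp C j m)" using mono_comp[OF mm jm] tm homD[OF j] by simp
    have jmh: "cmp C j m \<in> hom C M B" using comp[OF m j] .
    have sjm: "src C (cmp C j m) = M" using homD[OF jmh] by simp
    obtain phi where phiar: "phi \<in> ar C" and kphi: "is_kernel C phi M (cmp C j m)"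
      using mp[OF spec[OF ab_monos] jmm] unfolding sjm by blast
    define Z where "Z = tgt C phi"
    have "cmp C j m \<in> hom C M (src C phi)" using kerD[OF kphi] by simp
    then have sphi: "src C phi = B" using homD[OF jmh] homD[of "cmp C j m" M "src C phi"] by simp
    have phi: "phi \<in> hom C B Z" using homI[OF phiar] sphi unfolding Z_def by simp
    have Zob: "Z \<in> ob C" using hom_ob[OF phi] by simp
    have phijm: "cmp C phi (cmp C j m) = zr C M Z" using kerD[OF kphi] unfolding Z_def by simp
    have "h = cmp C (cmp C j m) e'" using je me assoc[OF e' m j] by simp
    then have "cmp C phi h = cmp C (cmp C phi (cmp C j m)) e'" using assoc[OF e' jmh phi] by simp
    also have "\<dots> = zr C A Z" using phijm comp_zr_l[OF e' Zob] by simp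
    finally have phih: "cmp C phi h = zr C A Z" .
    obtain w where w: "w \<in> hom C c Z" and wq: "cmp C w q = phi"
      using cokernel_factor[OF ch, of phi Z] phi phih unfolding A_def B_def by auto
    have "cmp C phi j = cmp C w (cmp C q j)" using wq assoc[OF j q w] by simp
    also have "\<dots> = zr C I Z" using qj comp_zr_r[OF w Iob] by simp
    finally have phij: "cmp C phi j = zr C I Z" .
    obtain s where s: "s \<in> hom C I M" and jms: "cmp C (cmp C j m) s = j"
      using kernel_factor[OF kphi, of j I] j sphi phij unfolding Z_def by auto
    have "cmp C j (cmp C m s) = cmp C j (idt C I)" using assoc[OF s m j] jms idr[OF j] by simp
    then have ms: "cmp C m s = idt C I"
      using mono_cancel[OF jm, of "cmp C m s" I "idt C I"] comp[OF s m] idt_hom[OF Iob] homD[OF j]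
      by auto
    have "y = cmp C y (cmp C m s)" using ms idr[OF y] by simp
    also have "\<dots> = cmp C (cmp C y m) s" using assoc[OF s m y] by simp
    also have "\<dots> = zr C I x" using ym comp_zr_l[OF s x] by simp
    finally show "y = zr C I x" .
  qed
  obtain phi where phiar: "phi \<in> ar C" and cphi: "is_cokernel C phi I e"
    using mp[OF spec[OF ab_epis] epi] unfolding te by blast
  define X where "X = src C phi"
  have "e \<in> hom C (tgt C phi) I" using cokD[OF cphi] by simp
  then have tphi: "tgt C phi = A" using se homD[of e "tgt C phi" I] by simp
  have phi: "phi \<in> hom C X A" using homI[OF phiar] tphi unfolding X_def by simp
  have ephi: "cmp C e phi = zr C X I" using cokD[OF cphi] unfolding X_def by simp
  obtain w where w: "w \<in> hom C X K" and kw: "cmp C k w = phi"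
    using kernel_factor[OF ke, of phi X] phi ephi se te by auto
  have ck: "is_cokernel C k I e"
  proof (rule cokI)
    show "k \<in> ar C" "I \<in> ob C" "e \<in> hom C (tgt C k) I" "cmp C e k = zr C (src C k) I"
      using k Iob e ek homD[OF k] by auto
    fix x y assume x: "x \<in> ob C" and y: "y \<in> hom C (tgt C k) x" and yk: "cmp C y k = zr C (src C k) x"
    have y': "y \<in> hom C A x" using y homD[OF k] by simp
    have "cmp C y phi = cmp C (cmp C y k) w" using kw assoc[OF w k y'] by simp
    also have "\<dots> = zr C X x" using yk homD[OF k] comp_zr_l[OF w x] by simp
    finally have "cmp C y phi = zr C (src C phi) x" unfolding X_def .
    then show "\<exists>!u. u \<in> hom C I x \<and> cmp C u e = y"
      using cokU[OF cphi x] y' tphi by simp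
  qed
  show ?thesis using e je ke ck unfolding A_def by blast
qed


lemma epi_cancel:
  assumes m: "is_epi C e" and g: "g \<in> hom C (tgt C e) x" and h: "h \<in> hom C (tgt C e) x"
   and eq: "cmp C g e = cmp C h e" shows "g = h"
proof -
  have x: "x \<in> ob C" using hom_ob[OF g] by blast
  have "\<forall>x\<in>ob C. \<forall>g\<in>hom C (tgt C e) x. \<forall>h\<in>hom C (tgt C e) x.
       cmp C g e = cmp C h e \<longrightarrow> g = h" using m by (simp add: is_epi_def)
  then show ?thesis using x g h eq by blast
qed

lemma se_of_core:
  assumes kh: "is_kernel C h K k" and ch: "is_cokernel C h c q" and kq: "is_kernel C q I j"
  shows "short_exact C K (src C h) I \<and> K \<in> ob C \<and> src C h \<in> ob C \<and> I \<in> ob C"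
proof -
  obtain e where e: "e \<in> hom C (src C h) I" and ke: "is_kernel C e K k" and ck: "is_cokernel C k I e"
    using core[OF kh ch kq] by blast
  have k: "k \<in> hom C K (src C h)" using kerD[OF kh] by simp
  have "short_exact C K (src C h) I" unfolding short_exact_def using e k ke ck by blast
  then show ?thesis using hom_ob[OF e] hom_ob[OF k] by blast
qed

lemma part1:
  assumes far: "f \<in> ar C" and gar: "g \<in> ar C" and sg: "src C g = tgt C f"
    and cp: "is_cokernel C f Cc p" and ki: "is_kernel C g K i" and pi: "cmp C p i = zr C K Cc"
    and im1: "is_image C f I1" and im2: "is_image C g I2" and im3: "is_image C (cmp C g f) I3"
  shows "K0_eq C (cls I1 + cls I2) (cls (tgt C f) + cls I3)"
proof -
  define V1 where "V1 = src C f"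
  define V2 where "V2 = tgt C f"
  define V3 where "V3 = tgt C g"
  have fh: "f \<in> hom C V1 V2" using homI[OF far] unfolding V1_def V2_def .
  have gh: "g \<in> hom C V2 V3" using homI[OF gar] sg unfolding V2_def V3_def by simp
  have gfh: "cmp C g f \<in> hom C V1 V3" using comp[OF fh gh] .
  obtain c2 q2 j2 where c2: "is_cokernel C g c2 q2" and k2: "is_kernel C q2 I2 j2"
    using im2 unfolding is_image_def by blast
  have se1: "short_exact C K V2 I2 \<and> K \<in> ob C \<and> V2 \<in> ob C \<and> I2 \<in> ob C"
    using se_of_core[OF ki c2 k2] sg unfolding V2_def by simp
  obtain c1 p1 j1 where c1: "is_cokernel C f c1 p1" and k1: "is_kernel C p1 I1 j1"
    using im1 unfolding is_image_def by blast
  have "\<exists>Kf kf. is_kernel C f Kf kf" using bspec[OF ab_kers far] .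
  then obtain Kf kf where kf: "is_kernel C f Kf kf" by blast
  obtain e1 where e1: "e1 \<in> hom C V1 I1" and je1: "cmp C j1 e1 = f" and ce1: "is_cokernel C kf I1 e1"
    using core[OF kf c1 k1] unfolding V1_def by blast
  have e1epi: "is_epi C e1" by (rule cokernel_epi[OF ce1])
  have p1: "p1 \<in> hom C V2 c1" and p1f: "cmp C p1 f = zr C V1 c1"
    using cokD[OF c1] unfolding V1_def V2_def by auto
  have p: "p \<in> hom C V2 Cc" using cokD[OF cp] unfolding V2_def by simp
  have i: "i \<in> hom C K V2" and Kob: "K \<in> ob C" and gi: "cmp C g i = zr C K V3"
    using kerD[OF ki] sg unfolding V2_def V3_def by auto
  obtain w where w: "w \<in> hom C Cc c1" and wp: "cmp C w p = p1"
    using cokernel_factor[OF cp, of p1 c1] p1 p1f unfolding V1_def V2_def by auto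
  have "cmp C p1 i = cmp C w (cmp C p i)" using wp assoc[OF i p w] by simp
  also have "\<dots> = zr C K c1" using pi comp_zr_r[OF w Kob] by simp
  finally have p1i: "cmp C p1 i = zr C K c1" .
  have j1: "j1 \<in> hom C I1 V2" and I1ob: "I1 \<in> ob C" using kerD[OF k1] homD[OF p1] by auto
  have j1m: "is_mono C j1" by (rule kernel_mono[OF k1])
  obtain i' where i': "i' \<in> hom C K I1" and ji': "cmp C j1 i' = i"
    using kernel_factor[OF k1, of i K] i p1i homD[OF p1] by auto
  define h where "h = cmp C g j1"
  have hh: "h \<in> hom C I1 V3" using comp[OF j1 gh] unfolding h_def .
  have har: "h \<in> ar C" and sh: "src C h = I1" and th: "tgt C h = V3" using homD[OF hh] by auto
  have kh: "is_kernel C h K i'"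
  proof (rule kerI)
    show "h \<in> ar C" "K \<in> ob C" "i' \<in> hom C K (src C h)" using har Kob i' sh by auto
    show "cmp C h i' = zr C K (tgt C h)" using assoc[OF i' j1 gh] ji' gi th unfolding h_def by simp
    fix x y assume x: "x \<in> ob C" and y: "y \<in> hom C x (src C h)" and hy: "cmp C h y = zr C x (tgt C h)"
    have y': "y \<in> hom C x I1" using y sh by simp
    have jy: "cmp C j1 y \<in> hom C x V2" using comp[OF y' j1] .
    have "cmp C g (cmp C j1 y) = zr C x V3" using assoc[OF y' j1 gh] hy th unfolding h_def by simp
    then have U: "\<exists>!u. u \<in> hom C x K \<and> cmp C i u = cmp C j1 y"
      using kerU[OF ki x, of "cmp C j1 y"] jy sg unfolding V2_def V3_def by simp
    have eq: "(u \<in> hom C x K \<and> cmp C i' u = y) \<longleftrightarrow> (u \<in> hom C x K \<and> cmp C i u = cmp C j1 y)" for u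
    proof (cases "u \<in> hom C x K")
      case True
      have iu: "cmp C i' u \<in> hom C x I1" using comp[OF True i'] .
      have "cmp C i u = cmp C j1 (cmp C i' u)" using assoc[OF True i' j1] ji' by simp
      moreover have "cmp C j1 (cmp C i' u) = cmp C j1 y \<longleftrightarrow> cmp C i' u = y"
        using mono_cancel[OF j1m, of "cmp C i' u" x y] iu y' homD[OF j1] by auto
      ultimately show ?thesis using True by simp
    qed simp
    show "\<exists>!u. u \<in> hom C x K \<and> cmp C i' u = y" using U by (simp only: eq)
  qed
  obtain c3 q3 j3 where c3: "is_cokernel C (cmp C g f) c3 q3" and k3: "is_kernel C q3 I3 j3"
    using im3 unfolding is_image_def by blast
  have q3: "q3 \<in> hom C V3 c3" and c3ob: "c3 \<in> ob C" and q3gf: "cmp C q3 (cmp C g f) = zr C V1 c3"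
    using cokD[OF c3] homD[OF gfh] by auto
  have he1: "cmp C h e1 = cmp C g f" using assoc[OF e1 j1 gh] je1 unfolding h_def by simp
  have te1: "tgt C e1 = I1" using homD[OF e1] by simp
  have ch: "is_cokernel C h c3 q3"
  proof (rule cokI)
    show "h \<in> ar C" "c3 \<in> ob C" "q3 \<in> hom C (tgt C h) c3" using har c3ob q3 th by auto
    have "cmp C (cmp C q3 h) e1 = cmp C (zr C I1 c3) e1"
      using assoc[OF e1 hh q3] he1 q3gf comp_zr_l[OF e1 c3ob] by simp
    then show "cmp C q3 h = zr C (src C h) c3"
      using epi_cancel[OF e1epi, of "cmp C q3 h" c3 "zr C I1 c3"] comp[OF hh q3] zr_hom[OF I1ob c3ob] te1 sh
      by simp
    fix x y assume x: "x \<in> ob C" and y: "y \<in> hom C (tgt C h) x" and yh: "cmp C y h = zr C (src C h) x"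
    have y': "y \<in> hom C V3 x" using y th by simp
    have "cmp C y (cmp C g f) = cmp C (cmp C y h) e1" using assoc[OF e1 hh y'] he1 by simp
    also have "\<dots> = zr C V1 x" using yh sh comp_zr_l[OF e1 x] by simp
    finally have "cmp C y (cmp C g f) = zr C (src C (cmp C g f)) x" using homD[OF gfh] by simp
    then show "\<exists>!u. u \<in> hom C c3 x \<and> cmp C u q3 = y"
      using cokU[OF c3 x] y' homD[OF gfh] by simp
  qed
  have se2: "short_exact C K I1 I3 \<and> K \<in> ob C \<and> I1 \<in> ob C \<and> I3 \<in> ob C"
    using se_of_core[OF kh ch k3] sh by simp
  have r1: "cls V2 - cls K - cls I2 \<in> K0_rel C" using se1 by (blast intro: K0_rel.gen)
  have r2: "cls I1 - cls K - cls I3 \<in> K0_rel C" using se2 by (blast intro: K0_rel.gen)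
  have "(cls I1 - cls K - cls I3) - (cls V2 - cls K - cls I2) \<in> K0_rel C"
    using r1 r2 by (rule K0_rel.diff[rotated])
  moreover have "(cls I1 - cls K - cls I3) - (cls V2 - cls K - cls I2) =
     (cls I1 + cls I2) - (cls V2 + cls I3)" by (simp add: algebra_simps)
  ultimately show ?thesis unfolding K0_eq_def V2_def by simp
qed

end



lemma fiber_count:
  fixes G :: "'b::ab_group_add \<Rightarrow> 'c::ab_group_add"
  assumes fin: "finite (UNIV::'b set)"
    and Gd: "\<And>x y. G (x - y) = G x - G y"
    and Hd: "\<And>x y. x \<in> H \<Longrightarrow> y \<in> H \<Longrightarrow> x - y \<in> H"
    and Ha: "\<And>x y. x \<in> H \<Longrightarrow> y \<in> H \<Longrightarrow> x + y \<in> H"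
  shows "card H = card (H \<inter> {y. G y = 0}) * card (G ` H)"
proof -
  have fH: "finite H" using fin by (rule finite_subset[rotated]) simp
  have "card H = (\<Sum>z\<in>G ` H. card {x\<in>H. G x = z})"
    using sum.group[OF fH finite_imageI[OF fH] subset_refl, where g=G and h="\<lambda>_. 1::nat"] by simp
  also have "\<dots> = (\<Sum>z\<in>G ` H. card (H \<inter> {y. G y = 0}))"
  proof (rule sum.cong[OF refl])
    fix z assume "z \<in> G ` H"
    then obtain y0 where y0: "y0 \<in> H" "G y0 = z" by auto
    have "{x\<in>H. G x = z} = (\<lambda>u. y0 + u) ` (H \<inter> {y. G y = 0})"
    proof (rule set_eqI, rule iffI)
      fix x assume "x \<in> {x\<in>H. G x = z}"
      then have x: "x \<in> H" "G x = z" by auto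
      have "x - y0 \<in> H" using Hd x y0 by auto
      moreover have "G (x - y0) = 0" using Gd x y0 by simp
      ultimately show "x \<in> (\<lambda>u. y0 + u) ` (H \<inter> {y. G y = 0})"
        by (intro image_eqI[of _ _ "x - y0"]) auto
    next
      fix x assume "x \<in> (\<lambda>u. y0 + u) ` (H \<inter> {y. G y = 0})"
      then obtain u where u: "u \<in> H" "G u = 0" and xu: "x = y0 + u" by auto
      have "y0 + u \<in> H" using Ha y0 u by auto
      moreover have "G (y0 + u - u) = G (y0 + u) - G u" by (rule Gd)
      ultimately show "x \<in> {x\<in>H. G x = z}" using u y0 xu by simp
    qed
    moreover have "inj_on (\<lambda>u. y0 + u) (H \<inter> {y. G y = 0})" by (rule inj_onI) simp
    ultimately show "card {x\<in>H. G x = z} = card (H \<inter> {y. G y = 0})"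
      by (simp add: card_image)
  qed
  also have "\<dots> = card (H \<inter> {y. G y = 0}) * card (G ` H)" by simp
  finally show ?thesis .
qed

lemma fin_space:
  assumes "finite_dimensional_vector_space (s :: 'k::{field,finite} \<Rightarrow> 'b::ab_group_add \<Rightarrow> 'b) B"
  shows "finite (UNIV :: 'b set)"
proof -
  interpret V: finite_dimensional_vector_space s B by fact
  have "UNIV = range (\<lambda>u. \<Sum>v\<in>B. s (u v) v)"
    using V.span_finite[OF V.finite_Basis] V.span_Basis by simp
  also have "\<dots> = (\<lambda>u. \<Sum>v\<in>B. s (u v) v) ` (B \<rightarrow>\<^sub>E UNIV)"
  proof safe
    fix u show "(\<Sum>v\<in>B. s (u v) v) \<in> (\<lambda>u. \<Sum>v\<in>B. s (u v) v) ` (B \<rightarrow>\<^sub>E UNIV)"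
      by (rule image_eqI[of _ _ "restrict u B"]) (auto intro!: sum.cong)
  qed auto
  also have "finite \<dots>" using V.finite_Basis by (intro finite_imageI finite_PiE) auto
  finally show ?thesis .
qed

lemma part2:
  fixes s1 :: "'k::{field,finite} \<Rightarrow> 'a::ab_group_add \<Rightarrow> 'a"
    and s2 :: "'k \<Rightarrow> 'b::ab_group_add \<Rightarrow> 'b"
    and s3 :: "'k \<Rightarrow> 'c::ab_group_add \<Rightarrow> 'c"
    and B1 :: "'a set" and B2 :: "'b set" and B3 :: "'c set"
    and F :: "'a \<Rightarrow> 'b" and G :: "'b \<Rightarrow> 'c"
  assumes "finite_dimensional_vector_space s2 B2"
      "Vector_Spaces.linear s1 s2 F" "Vector_Spaces.linear s2 s3 G"
      "{y. G y = 0} \<subseteq> range F"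
  shows "card (range F) * card (range G) = card (UNIV :: 'b set) * card (range (G \<circ> F))"
proof -
  have fin: "finite (UNIV::'b set)" by (rule fin_space[OF assms(1)])
  have mF: "module_hom s1 s2 F" using assms(2) by (simp add: module_hom_iff_linear)
  have mG: "module_hom s2 s3 G" using assms(3) by (simp add: module_hom_iff_linear)
  have Gd: "\<And>x y. G (x - y) = G x - G y" using module_hom.diff[OF mG] by blast
  have c1: "card (UNIV::'b set) = card {y. G y = 0} * card (range G)"
    using fiber_count[OF fin Gd, of UNIV] by simp
  have c2: "card (range F) = card (range F \<inter> {y. G y = 0}) * card (G ` range F)"
    by (rule fiber_count[OF fin Gd])
      (auto simp: module_hom.diff[OF mF, symmetric] module_hom.add[OF mF, symmetric])
  have "range F \<inter> {y. G y = 0} = {y. G y = 0}" using assms(4) by blast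
  moreover have "G ` range F = range (G \<circ> F)" by (simp add: image_comp)
  ultimately show ?thesis using c1 c2 by simp
qed

theorem propositionA2:
  fixes C :: "('o, 'm) acat"
    and f g p i :: 'm and Cc K I1 I2 I3 :: 'o
    and s1 :: "'k::{field,finite} \<Rightarrow> 'a::ab_group_add \<Rightarrow> 'a"
    and s2 :: "'k \<Rightarrow> 'b::ab_group_add \<Rightarrow> 'b"
    and s3 :: "'k \<Rightarrow> 'c::ab_group_add \<Rightarrow> 'c"
    and B1 :: "'a set" and B2 :: "'b set" and B3 :: "'c set"
    and F :: "'a \<Rightarrow> 'b" and G :: "'b \<Rightarrow> 'c"
  shows
   "(abelian_cat C \<and> f \<in> ar C \<and> g \<in> ar C \<and> src C g = tgt C f \<and>
      is_cokernel C f Cc p \<and> is_kernel C g K i \<and> cmp C p i = zr C K Cc \<and>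
      is_image C f I1 \<and> is_image C g I2 \<and> is_image C (cmp C g f) I3
      \<longrightarrow> K0_eq C (cls I1 + cls I2) (cls (tgt C f) + cls I3))
    \<and>
    (finite_dimensional_vector_space s1 B1 \<and> finite_dimensional_vector_space s2 B2 \<and>
      finite_dimensional_vector_space s3 B3 \<and>
      Vector_Spaces.linear s1 s2 F \<and> Vector_Spaces.linear s2 s3 G \<and>
      {y. G y = 0} \<subseteq> range F
      \<longrightarrow> card (range F) * card (range G) = card (UNIV :: 'b set) * card (range (G \<circ> F)))"
proof (rule conjI; intro impI)
  assume a: "abelian_cat C \<and> f \<in> ar C \<and> g \<in> ar C \<and> src C g = tgt C f \<and>
      is_cokernel C f Cc p \<and> is_kernel C g K i \<and> cmp C p i = zr C K Cc \<and>
      is_image C f I1 \<and> is_image C g I2 \<and> is_image C (cmp C g f) I3"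
  then interpret abcat C by unfold_locales blast
  show "K0_eq C (cls I1 + cls I2) (cls (tgt C f) + cls I3)"
    using part1 a by blast
next
  assume a: "finite_dimensional_vector_space s1 B1 \<and> finite_dimensional_vector_space s2 B2 \<and>
      finite_dimensional_vector_space s3 B3 \<and>
      Vector_Spaces.linear s1 s2 F \<and> Vector_Spaces.linear s2 s3 G \<and>
      {y. G y = 0} \<subseteq> range F"
  then show "card (range F) * card (range G) = card (UNIV :: 'b set) * card (range (G \<circ> F))"
    using part2[of s2 B2 s1 F s3 G] by blast
qed

end
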